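(* Let $\lambda,\mu>0$, let $N\ge M\ge1$ be integers, let $0<\nu<1$, and let $\{\mathcal{N}^{\nu}(t)\}_{t\ge0}$ be the fractional binomial process with birth rate $\lambda$, death rate $\mu$, maximal population $N$ and initial population $M$. Put $\xi=\lambda/(\lambda+\mu)$. Then for $0<s<t$, $$\mathbb{E}[\mathcal{N}^{\nu}(s)\mathcal{N}^{\nu}(t)]=(N\xi)^{2}-N\xi(\xi-1)\,E_{\nu}\big(-(\lambda+\mu)(t-s)^{\nu}\big).$$
   Context: $E_\nu(z)=\sum_{r\ge0}z^r/\Gamma(\nu r+1)$ is the Mittag-Leffler function. For $\nu\in(0,1)$, $\frac{d^\nu}{dt^\nu}$ denotes the Caputo fractional derivative. The fractional binomial process takes values in $\{0,\dots,N\}$, and its state probabilities $p_n^\nu(t)=\mathbb{P}(\mathcal{N}^\nu(t)=n)$ solve $$\frac{d^{\nu}}{dt^{\nu}}p_{n}^{\nu}(t)=\mu(n+1)p_{n+1}^{\nu}(t)-\mu np_{n}^{\nu}(t)-\lambda(N-n)p_{n}^{\nu}(t)+\lambda(N-n+1)p_{n-1}^{\nu}(t),\quad 0\le n\le N,$$ with $p_n^\nu(0)=\mathbf 1_{\{n=M\}}$. Conditionally on $\mathcal{N}^\nu(s)=n$, the law of $\mathcal{N}^\nu(s+r)$ is that of the process with the same parameters started from initial population $n$ and evaluated at time $r$; and $\mathbb{P}(\mathcal{N}^\nu(s)=n)$ is taken to be the binomial limit $P_n=\binom{N}{n}\xi^n(1-\xi)^{N-n}$ (the paper computes the mixed moment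 through the stationary joint generating function $Q^\nu(u,u';t-s)=\sum_{n=0}^N(1-u)^nP_nQ^\nu_n(u',t-s)$). *)

theory Defs
  imports "HOL-Analysis.Analysis"
begin

definition mittag_leffler :: "real \<Rightarrow> real \<Rightarrow> real" where
  "mittag_leffler \<nu> z = (\<Sum>r. z ^ r / Gamma (\<nu> * real r + 1))"

definition has_caputo_derivative :: "real \<Rightarrow> (real \<Rightarrow> real) \<Rightarrow> real \<Rightarrow> real \<Rightarrow> bool" where
  "has_caputo_derivative \<nu> f D t \<longleftrightarrow>
     continuous_on {0..t} f \<and> (\<forall>\<tau>\<in>{0<..<t}. f differentiable (at \<tau>)) \<and>
     ((\<lambda>\<tau>. deriv f \<tau> * (t - \<tau>) powr (- \<nu>) / Gamma (1 - \<nu>)) has_integral D) {0..t}"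

definition fbp_rhs :: "real \<Rightarrow> real \<Rightarrow> nat \<Rightarrow> (nat \<Rightarrow> real \<Rightarrow> real) \<Rightarrow> nat \<Rightarrow> real \<Rightarrow> real" where
  "fbp_rhs lam mu N p n t =
     (if n < N then mu * real (n + 1) * p (n + 1) t else 0)
     - mu * real n * p n t
     - lam * real (N - n) * p n t
     + (if 0 < n then lam * real (N - n + 1) * p (n - 1) t else 0)"

definition fbp_state_probs ::
  "real \<Rightarrow> real \<Rightarrow> nat \<Rightarrow> real \<Rightarrow> nat \<Rightarrow> (nat \<Rightarrow> real \<Rightarrow> real) \<Rightarrow> bool" where
  "fbp_state_probs lam mu N \<nu> m p \<longleftrightarrow>
     (\<forall>n\<le>N. p n 0 = (if n = m then 1 else 0)) \<and>
     (\<forall>n\<le>N. \<forall>t>0. has_caputo_derivative \<nu> (p n) (fbp_rhs lam mu N p n t) t)"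

definition binom_limit :: "nat \<Rightarrow> real \<Rightarrow> nat \<Rightarrow> real" where
  "binom_limit N \<xi> n = real (N choose n) * \<xi> ^ n * (1 - \<xi>) ^ (N - n)"

text \<open>Mixed moment E[N(s) N(t)] computed as in the paper: P(N(s)=n) is the binomial
  limit P_n, and conditionally on N(s)=n, N(t) is distributed as the process started
  from n evaluated at time t - s.  P0 n is the state-probability family of the
  process started from initial population n.\<close>
definition fbp_mixed_moment ::
  "nat \<Rightarrow> real \<Rightarrow> (nat \<Rightarrow> nat \<Rightarrow> real \<Rightarrow> real) \<Rightarrow> real \<Rightarrow> real \<Rightarrow> real" where
  "fbp_mixed_moment N \<xi> P0 s t =
     (\<Sum>n\<le>N. \<Sum>k\<le>N. real n * real k * binom_limit N \<xi> n * P0 n k (t - s))"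

end

theory Submission
  imports Defs
begin


lemma exp_ge_term:
  assumes "(B::real) \<ge> 0"
  shows "B ^ m / fact m \<le> exp B"
proof -
  have "(\<Sum>n\<in>{m}. B ^ n /\<^sub>R fact n) \<le> (\<Sum>n. B ^ n /\<^sub>R fact n)"
    using assms summable_exp_generic[of B]
    by (intro sum_le_suminf) auto
  then show ?thesis by (simp add: exp_def divide_inverse ac_simps)
qed

lemma Gamma_ge_1:
  assumes "(x::real) \<ge> 2"
  shows "Gamma x \<ge> 1"
proof -
  define t where "t = 1 / (x - 1)"
  have t: "0 < t" "t \<le> 1" using assms by (auto simp: t_def field_simps)
  have tx: "t * (x - 1) = 1" using assms by (simp add: t_def)
  have e: "(1 - t) *\<^sub>R 1 + t *\<^sub>R x = (2::real)"
    using tx by (simp add: algebra_simps)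
  have "(ln \<circ> Gamma) ((1 - t) *\<^sub>R 1 + t *\<^sub>R x) \<le> (1 - t) * (ln \<circ> Gamma) 1 + t * (ln \<circ> Gamma) x"
    using t assms by (intro convex_onD[OF log_convex_Gamma_real]) auto
  then have "0 \<le> t * ln (Gamma x)"
    unfolding e using Gamma_fact[of 1, where 'a=real] Gamma_fact[of 0, where 'a=real] by simp
  then have "0 \<le> ln (Gamma x)" using t by (simp add: zero_le_mult_iff)
  then show ?thesis using assms by (simp add: ln_ge_zero_iff)
qed

lemma Gamma_ge_fact:
  assumes "1 \<le> n" "real n + 1 \<le> (x::real)"
  shows "fact n \<le> Gamma x"
  using assms
proof (induction n arbitrary: x)
  case 0 then show ?case by simp
next
  case (Suc n)
  show ?case
  proof (cases "n = 0")
    case True then show ?thesis using Suc Gamma_ge_1[of x] by simp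
  next
    case False
    have "fact n \<le> Gamma (x - 1)" using Suc False by auto
    moreover have "Gamma x = (x - 1) * Gamma (x - 1)"
      using Gamma_plus1[of "x - 1"] Suc.prems by (auto simp: nonpos_Ints_def)
    moreover have "real (Suc n) \<le> x - 1" using Suc.prems by simp
    ultimately have "real (Suc n) * fact n \<le> (x - 1) * Gamma (x - 1)"
      by (intro mult_mono) auto
    then show ?thesis using \<open>Gamma x = _\<close> by (simp add: fact_Suc)
  qed
qed



lemma ml_summable_pos:
  assumes nu: "(\<nu>::real) > 0" and R: "R \<ge> 0"
  shows "summable (\<lambda>k. R ^ k / Gamma (\<nu> * real k + 1))"
proof -
  define B where "B = (2 * R + 1) powr (1 / \<nu>)"
  have B1: "B \<ge> 1" unfolding B_def using R nu by (intro ge_one_powr_ge_zero) auto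
  have Bnu: "B powr \<nu> = 2 * R + 1" unfolding B_def using R nu
    by (simp add: powr_powr)
  define C where "C = exp B * B ^ 2"
  have bound: "norm (R ^ k / Gamma (\<nu> * real k + 1)) \<le> C * (1/2) ^ k"
    if k: "k \<ge> nat \<lceil>3 / \<nu>\<rceil>" for k
  proof -
    have k3: "\<nu> * real k \<ge> 3"
    proof -
      have "real k \<ge> 3 / \<nu>" using k by linarith
      then show ?thesis using nu by (simp add: field_simps)
    qed
    define m where "m = nat \<lfloor>\<nu> * real k\<rfloor> - 1"
    have fl: "real_of_int \<lfloor>\<nu> * real k\<rfloor> \<le> \<nu> * real k" "\<nu> * real k < real_of_int \<lfloor>\<nu> * real k\<rfloor> + 1"
      by linarith+
    have fl3: "\<lfloor>\<nu> * real k\<rfloor> \<ge> 3" using k3 by linarith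
    have m1: "1 \<le> m" using fl3 unfolding m_def by linarith
    have mr: "real m = real_of_int \<lfloor>\<nu> * real k\<rfloor> - 1" using fl3 unfolding m_def by linarith
    have G: "fact m \<le> Gamma (\<nu> * real k + 1)"
      by (rule Gamma_ge_fact[OF m1]) (use mr fl in linarith)
    have Gpos: "Gamma (\<nu> * real k + 1) > 0" using k3 by (intro Gamma_real_pos) linarith
    have e: "B ^ m \<le> exp B * fact m"
      using exp_ge_term[of B m] B1 by (simp add: divide_le_eq)
    have "exp B * fact m \<le> exp B * Gamma (\<nu> * real k + 1)"
      using G by (intro mult_left_mono) auto
    with e have e2: "B ^ m \<le> exp B * Gamma (\<nu> * real k + 1)" by linarith
    have "B powr (\<nu> * real k - 2) \<le> B powr (real m)"
      using B1 by (intro powr_mono) (use mr fl in linarith)+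
    also have "\<dots> = B ^ m" using B1 by (simp add: powr_realpow)
    finally have b1: "B powr (\<nu> * real k - 2) \<le> exp B * Gamma (\<nu> * real k + 1)"
      using e2 by linarith
    have "B powr (\<nu> * real k - 2) = (B powr \<nu>) ^ k / B ^ 2"
    proof -
      have "B powr (\<nu> * real k - 2) = B powr (\<nu> * real k) / B powr 2"
        by (rule powr_diff)
      also have "B powr (\<nu> * real k) = (B powr \<nu>) powr (real k)"
        by (simp add: powr_powr)
      also have "\<dots> = (B powr \<nu>) ^ k" using B1 by (intro powr_realpow) auto
      also have "B powr 2 = B ^ 2" using B1 by (simp add: powr_realpow)
      finally show ?thesis .
    qed
    also have "\<dots> = (2 * R + 1) ^ k / B ^ 2" by (simp add: Bnu)
    finally have b2: "(2 * R + 1) ^ k \<le> B ^ 2 * exp B * Gamma (\<nu> * real k + 1)"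
      using b1 B1 by (simp add: divide_le_eq mult_ac)
    have "R ^ k \<le> (2 * R + 1) ^ k * (1/2) ^ k"
      using R by (simp add: power_mult_distrib[symmetric] power_mono)
    also have "\<dots> \<le> B ^ 2 * exp B * Gamma (\<nu> * real k + 1) * (1/2) ^ k"
      using b2 by (intro mult_right_mono) auto
    finally have "R ^ k \<le> C * (1/2)^k * Gamma (\<nu> * real k + 1)"
      by (simp add: C_def mult_ac)
    then show ?thesis using Gpos R by (simp add: divide_le_eq)
  qed
  show ?thesis
  proof (rule summable_comparison_test')
    show "summable (\<lambda>k. C * (1/2::real) ^ k)"
      by (intro summable_mult summable_geometric) auto
    show "norm (R ^ k / Gamma (\<nu> * real k + 1)) \<le> C * (1/2) ^ k"
      if "k \<ge> nat \<lceil>3 / \<nu>\<rceil>" for k using bound[OF that] .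
  qed
qed



definition mlc :: "real \<Rightarrow> nat \<Rightarrow> real" where
  "mlc \<nu> k = 1 / Gamma (\<nu> * real k + 1)"

lemma ml_eq: "mittag_leffler \<nu> z = (\<Sum>k. mlc \<nu> k * z ^ k)"
  unfolding mittag_leffler_def mlc_def by simp

lemma Gamma_nu_pos: "\<nu> > 0 \<Longrightarrow> Gamma (\<nu> * real k + 1) > 0"
  by (intro Gamma_real_pos) (simp add: add_nonneg_pos)

lemma ml_summable:
  assumes "\<nu> > 0"
  shows "summable (\<lambda>k. mlc \<nu> k * z ^ k)"
proof (rule summable_norm_cancel)
  have "summable (\<lambda>k. \<bar>z\<bar> ^ k / Gamma (\<nu> * real k + 1))"
    using ml_summable_pos[OF assms, of "\<bar>z\<bar>"] by simp
  then show "summable (\<lambda>k. norm (mlc \<nu> k * z ^ k))"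
    using Gamma_nu_pos[OF assms]
    by (simp add: mlc_def abs_mult power_abs less_imp_le)
qed

definition mld :: "real \<Rightarrow> real \<Rightarrow> real" where
  "mld \<nu> z = (\<Sum>k. diffs (mlc \<nu>) k * z ^ k)"

lemma ml_deriv:
  assumes "\<nu> > 0"
  shows "(mittag_leffler \<nu> has_real_derivative mld \<nu> z) (at z)"
proof -
  have "((\<lambda>z. \<Sum>k. mlc \<nu> k * z ^ k) has_field_derivative (\<Sum>k. diffs (mlc \<nu>) k * z ^ k)) (at z)"
    by (rule termdiffs_strong'[of "norm z + 1"]) (use ml_summable[OF assms] in auto)
  then show ?thesis unfolding mld_def ml_eq[abs_def] .
qed

lemma ml_cont: "\<nu> > 0 \<Longrightarrow> continuous_on A (mittag_leffler \<nu>)"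
  using ml_deriv by (meson DERIV_isCont continuous_at_imp_continuous_on)

lemma ml_zero: "mittag_leffler \<nu> 0 = 1"
proof -
  have "(\<Sum>k. mlc \<nu> k * 0 ^ k) = mlc \<nu> 0"
    by (subst suminf_finite[of "{0}"]) auto
  then show ?thesis by (simp add: ml_eq mlc_def)
qed

lemma diffs_mlc_summable:
  assumes "\<nu> > 0"
  shows "summable (\<lambda>k. diffs (mlc \<nu>) k * z ^ k)"
  by (rule termdiff_converges_all) (use ml_summable[OF assms] in auto)

lemma beta_interval:
  assumes t: "(t::real) > 0" and A: "A > 0" and B: "B > 0"
  shows "((\<lambda>x. x powr (A - 1) * (t - x) powr (B - 1)) has_integral
            t powr (A + B - 1) * Beta A B) {0..t}"
proof -
  define f where "f = (\<lambda>u::real. u powr (A - 1) * (1 - u) powr (B - 1))"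
  have "((\<lambda>x. f ((1/t) * x)) has_integral (1 / \<bar>1/t\<bar>) *\<^sub>R Beta A B) ((\<lambda>x. x / (1/t)) ` {0..1})"
    by (rule has_integral_stretch_real) (use has_integral_Beta_real[OF A B] t in \<open>auto simp: f_def\<close>)
  moreover have "(\<lambda>x. x / (1/t)) ` {0..1} = {0..t}"
    using t by (auto simp: image_iff intro!: bexI[where x="_ / t"])
  ultimately have I: "((\<lambda>x. f (x / t)) has_integral t * Beta A B) {0..t}"
    using t by simp
  have eq: "f (x / t) = (t powr (- (A - 1)) * t powr (- (B - 1))) * (x powr (A - 1) * (t - x) powr (B - 1))"
    if "x \<in> {0..t}" for x
  proof -
    have "1 - x / t = (t - x) / t" using t by (simp add: field_simps)
    then have "f (x / t) = (x powr (A - 1) / t powr (A - 1)) * ((t - x) powr (B - 1) / t powr (B - 1))"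
      by (simp add: f_def powr_divide)
    also have "\<dots> = (t powr (- (A - 1)) * t powr (- (B - 1))) * (x powr (A - 1) * (t - x) powr (B - 1))"
      by (simp only: powr_minus) (simp add: divide_inverse mult_ac)
    finally show ?thesis .
  qed
  have "((\<lambda>x. (t powr (- (A - 1)) * t powr (- (B - 1))) * (x powr (A - 1) * (t - x) powr (B - 1))) has_integral t * Beta A B) {0..t}"
    using I eq by (subst has_integral_cong[symmetric]) auto
  then have "((\<lambda>x. t powr (A + B - 2) * ((t powr (- (A - 1)) * t powr (- (B - 1))) * (x powr (A - 1) * (t - x) powr (B - 1)))) has_integral t powr (A + B - 2) * (t * Beta A B)) {0..t}"
    by (rule has_integral_mult_right)
  moreover have "t powr (A + B - 2) * (t powr (- (A - 1)) * t powr (- (B - 1))) = 1"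
  proof -
    have "t powr (A + B - 2) * (t powr (- (A - 1)) * t powr (- (B - 1))) = t powr (A + B - 2 + (- (A - 1)) + (- (B - 1)))"
      by (simp only: powr_add mult.assoc)
    also have "\<dots> = 1" using t by simp
    finally show ?thesis .
  qed
  moreover have "t powr (A + B - 2) * t = t powr (A + B - 1)"
  proof -
    have "t powr (A + B - 1) = t powr (A + B - 2 + 1)" by simp
    also have "\<dots> = t powr (A + B - 2) * t" using t by (simp only: powr_add powr_one)
    finally show ?thesis by simp
  qed
  ultimately show ?thesis by (simp add: mult.assoc[symmetric])
qed



lemma neg_pow: "(- (a * x::real)) ^ k = (-a) ^ k * x ^ k"
  by (metis minus_mult_left power_mult_distrib)

lemma diffs_mlc_eq:
  assumes "\<nu> > 0"
  shows "diffs (mlc \<nu>) k = 1 / (\<nu> * Gamma (\<nu> * real k + \<nu>))"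
proof -
  have E: "\<nu> * real k + \<nu> > 0" using assms by (simp add: add_nonneg_pos)
  have G: "Gamma (\<nu> * real k + \<nu> + 1) = (\<nu> * real k + \<nu>) * Gamma (\<nu> * real k + \<nu>)"
    by (rule Gamma_plus1) (use E in \<open>auto simp: nonpos_Ints_def\<close>)
  have s: "\<nu> * real (Suc k) + 1 = \<nu> * real k + \<nu> + 1" by (simp add: algebra_simps)
  have "diffs (mlc \<nu>) k = real (Suc k) / Gamma (\<nu> * real (Suc k) + 1)"
    by (simp add: diffs_def mlc_def)
  also have "\<dots> = real (Suc k) / ((\<nu> * real k + \<nu>) * Gamma (\<nu> * real k + \<nu>))"
    by (simp only: s G)
  also have "(\<nu> * real k + \<nu>) * Gamma (\<nu> * real k + \<nu>) = real (Suc k) * (\<nu> * Gamma (\<nu> * real k + \<nu>))"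
    by (simp add: algebra_simps)
  also have "real (Suc k) / (real (Suc k) * (\<nu> * Gamma (\<nu> * real k + \<nu>))) = 1 / (\<nu> * Gamma (\<nu> * real k + \<nu>))"
    by simp
  finally show ?thesis .
qed

lemma ml_comp_deriv:
  assumes nu: "\<nu> > 0" and x: "x > 0"
  shows "((\<lambda>r. mittag_leffler \<nu> (-a * r powr \<nu>)) has_real_derivative
           mld \<nu> (-a * x powr \<nu>) * (-a * (\<nu> * x powr (\<nu> - 1)))) (at x)"
proof -
  have "((\<lambda>r. -a * r powr \<nu>) has_real_derivative (-a * (\<nu> * x powr (\<nu> - 1)))) (at x)"
    using has_real_derivative_powr[OF x, of \<nu>] by (intro DERIV_cmult) 
  from DERIV_chain2[OF ml_deriv[OF nu] this] show ?thesis .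
qed

lemma ml_caputo:
  assumes nu: "0 < \<nu>" "\<nu> < 1" and a: "a > 0" and t: "t > 0"
  shows "has_caputo_derivative \<nu> (\<lambda>r. mittag_leffler \<nu> (-a * r powr \<nu>))
           (-a * mittag_leffler \<nu> (-a * t powr \<nu>)) t"
proof -
  define g where "g = (\<lambda>r. mittag_leffler \<nu> (-a * r powr \<nu>))"
  define D where "D = (\<lambda>x. mld \<nu> (-a * x powr \<nu>) * (-a * (\<nu> * x powr (\<nu> - 1))))"
  define G1 where "G1 = Gamma (1 - \<nu>)"
  have G1: "G1 > 0" using nu by (simp add: G1_def)
  have gder: "x > 0 \<Longrightarrow> (g has_real_derivative D x) (at x)" for x
    unfolding g_def D_def by (rule ml_comp_deriv[OF nu(1)])
  have cont: "continuous_on {0..t} g"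
  proof -
    have "continuous_on {0..t} (\<lambda>r. -a * r powr \<nu>)"
      using nu by (intro continuous_intros continuous_on_powr') auto
    then show ?thesis unfolding g_def
      by (rule continuous_on_compose2[OF ml_cont[OF nu(1)]]) auto
  qed
  have diff: "\<forall>\<tau>\<in>{0<..<t}. g differentiable (at \<tau>)"
    unfolding real_differentiable_def using gder by (meson greaterThanLessThan_iff)
  define E where "E = (\<lambda>k::nat. \<nu> * real k + \<nu>)"
  have Epos: "E k > 0" for k using nu by (simp add: E_def add_nonneg_pos)
  have dE: "diffs (mlc \<nu>) k = 1 / (\<nu> * Gamma (E k))" for k
    unfolding E_def by (rule diffs_mlc_eq[OF nu(1)])
  define Ck where "Ck = (\<lambda>k::nat. (-a) ^ (k + 1) / (Gamma (E k) * G1))"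
  define T where "T = (\<lambda>k \<tau>. Ck k * (\<tau> powr (E k - 1) * (t - \<tau>) powr (- \<nu>)))"
  define I where "I = (\<lambda>k::nat. -a * (mlc \<nu> k * (-a * t powr \<nu>) ^ k))"
  have TI: "(T k has_integral I k) {0..t}" for k
  proof -
    have "((\<lambda>x. x powr (E k - 1) * (t - x) powr ((1 - \<nu>) - 1)) has_integral
            t powr (E k + (1 - \<nu>) - 1) * Beta (E k) (1 - \<nu>)) {0..t}"
      by (rule beta_interval) (use t Epos nu in auto)
    then have "(T k has_integral Ck k * (t powr (E k + (1 - \<nu>) - 1) * Beta (E k) (1 - \<nu>))) {0..t}"
      unfolding T_def by (intro has_integral_mult_right) simp
    moreover have "Ck k * (t powr (E k + (1 - \<nu>) - 1) * Beta (E k) (1 - \<nu>)) = I k"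
    proof -
      have e1: "t powr (E k - \<nu>) = (t powr \<nu>) ^ k"
        using t by (simp add: E_def powr_power mult.commute)
      have e2: "Gamma (1 + E k - \<nu>) = Gamma (1 + \<nu> * real k)" by (simp add: E_def)
      have e3: "(- (a * t powr \<nu>)) ^ k = (-a) ^ k * (t powr \<nu>) ^ k"
        by (simp add: power_mult_distrib[symmetric])
      have "Gamma (E k) > 0" using Epos by simp
      then show ?thesis using G1
        by (simp add: Ck_def I_def Beta_def mlc_def G1_def field_simps e1 e2 e3)
    qed
    ultimately show ?thesis by simp
  qed
  define g0 where "g0 = (\<lambda>\<tau>. if \<tau> \<in> {0<..<t} then D \<tau> * (t - \<tau>) powr (- \<nu>) / G1 else 0)"
  have conv: "(\<lambda>n. \<Sum>k<n. T k \<tau>) \<longlonglongrightarrow> g0 \<tau>" if "\<tau> \<in> {0..t}" for \<tau>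
  proof (cases "\<tau> \<in> {0<..<t}")
    case True
    then have tp: "\<tau> > 0" by simp
    define K where "K = -a * (\<nu> * \<tau> powr (\<nu> - 1)) * (t - \<tau>) powr (- \<nu>) / G1"
    have "(\<lambda>k. diffs (mlc \<nu>) k * (-a * \<tau> powr \<nu>) ^ k) sums mld \<nu> (-a * \<tau> powr \<nu>)"
      unfolding mld_def by (rule summable_sums[OF diffs_mlc_summable[OF nu(1)]])
    then have "(\<lambda>k. diffs (mlc \<nu>) k * (-a * \<tau> powr \<nu>) ^ k * K) sums (mld \<nu> (-a * \<tau> powr \<nu>) * K)"
      by (rule sums_mult2)
    moreover have "diffs (mlc \<nu>) k * (-a * \<tau> powr \<nu>) ^ k * K = T k \<tau>" for k
    proof -
      have p: "\<tau> powr (E k - 1) = (\<tau> powr \<nu>) ^ k * \<tau> powr (\<nu> - 1)"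
      proof -
        have "\<tau> powr (E k - 1) = \<tau> powr (real k * \<nu> + (\<nu> - 1))"
          by (rule arg_cong[where f="\<lambda>x. \<tau> powr x"]) (simp add: E_def)
        also have "\<dots> = \<tau> powr (real k * \<nu>) * \<tau> powr (\<nu> - 1)" by (rule powr_add)
        also have "\<tau> powr (real k * \<nu>) = (\<tau> powr \<nu>) ^ k" using tp by (simp add: powr_power)
        finally show ?thesis .
      qed
      have "Gamma (E k) > 0" using Epos by simp
      then show ?thesis using nu G1
        by (simp add: dE T_def Ck_def K_def p neg_pow field_simps)
    qed
    ultimately have "(\<lambda>k. T k \<tau>) sums (mld \<nu> (-a * \<tau> powr \<nu>) * K)" by simp
    moreover have "mld \<nu> (-a * \<tau> powr \<nu>) * K = g0 \<tau>"
      using True by (simp add: g0_def D_def K_def)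
    ultimately show ?thesis by (simp add: sums_def)
  next
    case False
    with that have "\<tau> = 0 \<or> \<tau> = t" by auto
    then have "T k \<tau> = 0" for k
      using Epos nu by (auto simp: T_def)
    moreover have "g0 \<tau> = 0" using False unfolding g0_def by auto
    ultimately show ?thesis by simp
  qed
  define d where "d = (\<lambda>k::nat. a ^ (k + 1) * t powr (\<nu> * real k) / (Gamma (E k) * G1))"
  have d_eq: "d k = (a * \<nu> / G1) * (diffs (mlc \<nu>) k * (a * t powr \<nu>) ^ k)" for k
  proof -
    have e3: "t powr (\<nu> * real k) = (t powr \<nu>) ^ k"
      using t by (simp add: powr_power mult.commute)
    have "Gamma (E k) > 0" using Epos by simp
    then show ?thesis using nu G1
      by (simp add: d_def dE e3 power_mult_distrib field_simps)
  qed
  have dsum: "summable d"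
    unfolding d_eq by (intro summable_mult diffs_mlc_summable[OF nu(1)])
  have d0: "d k \<ge> 0" for k using a G1 Epos[of k] by (simp add: d_def)
  define w where "w = (\<lambda>\<tau>. \<tau> powr (\<nu> - 1) * (t - \<tau>) powr (- \<nu>))"
  define h where "h = (\<lambda>\<tau>. suminf d * w \<tau>)"
  have hint: "h integrable_on {0..t}"
  proof -
    have "(w has_integral t powr (\<nu> + (1 - \<nu>) - 1) * Beta \<nu> (1 - \<nu>)) {0..t}"
      using beta_interval[of t \<nu> "1 - \<nu>"] t nu by (simp add: w_def)
    then have "w integrable_on {0..t}" by (auto simp: integrable_on_def)
    then show ?thesis unfolding h_def by (rule integrable_on_mult_right)
  qed
  have Tbound: "norm (T k \<tau>) \<le> d k * w \<tau>" if "\<tau> \<in> {0..t}" for k \<tau>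
  proof -
    have tau: "0 \<le> \<tau>" "\<tau> \<le> t" using that by auto
    have "\<tau> powr (E k - 1) = \<tau> powr (\<nu> * real k) * \<tau> powr (\<nu> - 1)"
      by (simp add: E_def powr_add[symmetric] algebra_simps)
    also have "\<dots> \<le> t powr (\<nu> * real k) * \<tau> powr (\<nu> - 1)"
      using tau nu by (intro mult_right_mono powr_mono2) auto
    finally have p: "\<tau> powr (E k - 1) \<le> t powr (\<nu> * real k) * \<tau> powr (\<nu> - 1)" .
    have "norm (T k \<tau>) = a ^ (k + 1) / (Gamma (E k) * G1) * (\<tau> powr (E k - 1) * (t - \<tau>) powr (- \<nu>))"
      using a G1 Epos[of k] by (simp add: T_def Ck_def abs_mult power_abs)
    also have "\<dots> \<le> a ^ (k + 1) / (Gamma (E k) * G1) * ((t powr (\<nu> * real k) * \<tau> powr (\<nu> - 1)) * (t - \<tau>) powr (- \<nu>))"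
      using p a G1 Epos[of k] by (intro mult_left_mono mult_right_mono) auto
    also have "\<dots> = d k * w \<tau>" by (simp add: d_def w_def)
    finally show ?thesis .
  qed
  have w0: "\<tau> \<in> {0..t} \<Longrightarrow> w \<tau> \<ge> 0" for \<tau> by (simp add: w_def)
  have pbound: "norm (\<Sum>k<n. T k \<tau>) \<le> h \<tau>" if "\<tau> \<in> {0..t}" for n \<tau>
  proof -
    have "norm (\<Sum>k<n. T k \<tau>) \<le> (\<Sum>k<n. norm (T k \<tau>))" by (rule norm_sum)
    also have "\<dots> \<le> (\<Sum>k<n. d k * w \<tau>)" using Tbound[OF that] by (intro sum_mono)
    also have "\<dots> = (\<Sum>k<n. d k) * w \<tau>" by (simp add: sum_distrib_right)
    also have "\<dots> \<le> suminf d * w \<tau>"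
      using w0[OF that] d0 dsum by (intro mult_right_mono sum_le_suminf) auto
    finally show ?thesis by (simp add: h_def)
  qed
  have Isum: "(\<lambda>n. \<Sum>k<n. I k) \<longlonglongrightarrow> -a * mittag_leffler \<nu> (-a * t powr \<nu>)"
  proof -
    have "(\<lambda>k. mlc \<nu> k * (-a * t powr \<nu>) ^ k) sums mittag_leffler \<nu> (-a * t powr \<nu>)"
      unfolding ml_eq by (rule summable_sums[OF ml_summable[OF nu(1)]])
    then have "(\<lambda>k. -a * (mlc \<nu> k * (-a * t powr \<nu>) ^ k)) sums (-a * mittag_leffler \<nu> (-a * t powr \<nu>))"
      by (rule sums_mult)
    then show ?thesis by (simp add: sums_def I_def)
  qed
  have g0int: "(g0 has_integral (-a * mittag_leffler \<nu> (-a * t powr \<nu>))) {0..t}"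
  proof (rule has_integral_dominated_convergence[OF _ hint _ _ Isum])
    show "((\<lambda>\<tau>. \<Sum>k<n. T k \<tau>) has_integral (\<Sum>k<n. I k)) {0..t}" for n
      by (intro has_integral_sum) (use TI in auto)
    show "\<forall>x\<in>{0..t}. norm (\<Sum>k<n. T k x) \<le> h x" for n using pbound by auto
    show "\<forall>x\<in>{0..t}. (\<lambda>n. \<Sum>k<n. T k x) \<longlonglongrightarrow> g0 x" using conv by auto
  qed
  have "((\<lambda>\<tau>. deriv g \<tau> * (t - \<tau>) powr (- \<nu>) / Gamma (1 - \<nu>)) has_integral
               (-a * mittag_leffler \<nu> (-a * t powr \<nu>))) {0..t}"
  proof (rule has_integral_spike_finite[where S="{0, t}", OF _ _ g0int])
    fix x assume "x \<in> {0..t} - {0, t}"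
    then have x: "0 < x" "x < t" by auto
    then have "deriv g x = D x" using gder[OF x(1)] by (simp add: DERIV_imp_deriv)
    then show "deriv g x * (t - x) powr (- \<nu>) / Gamma (1 - \<nu>) = g0 x"
      using x by (simp add: g0_def G1_def)
  qed auto
  then show ?thesis
    unfolding has_caputo_derivative_def g_def[symmetric] using cont diff by auto
qed



lemma caputo_diff_at:
  assumes "\<And>t. t > 0 \<Longrightarrow> has_caputo_derivative \<nu> w (Dw t) t" and "x > 0"
  shows "(w has_real_derivative deriv w x) (at x)"
proof -
  have "has_caputo_derivative \<nu> w (Dw (x + 1)) (x + 1)" using assms by auto
  then have "w differentiable (at x)" using assms(2) unfolding has_caputo_derivative_def by auto
  then show ?thesis by (simp add: DERIV_deriv_iff_real_differentiable)
qed

lemma caputo_max_principle: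
  assumes nu: "0 < \<nu>" "\<nu> < 1" and c: "c \<ge> 0" and w0: "w 0 = 0"
    and cap: "\<And>t. t > 0 \<Longrightarrow> has_caputo_derivative \<nu> w (- c * w t) t"
    and T: "T > 0"
  shows "w T \<le> 0"
proof (rule ccontr)
  assume "\<not> w T \<le> 0"
  then have wT: "w T > 0" by simp
  have contT: "continuous_on {0..T} w" using cap[OF T] unfolding has_caputo_derivative_def by auto
  obtain t0 where t0: "t0 \<in> {0..T}" and t0max: "\<And>y. y \<in> {0..T} \<Longrightarrow> w y \<le> w t0"
    using continuous_attains_sup[OF compact_Icc _ contT] T by fastforce
  define M where "M = w t0"
  have M: "M > 0" using t0max[of T] T wT by (simp add: M_def)
  have t0pos: "t0 > 0" using t0 M w0 by (cases "t0 = 0") (auto simp: M_def)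
  have t0T: "t0 \<le> T" using t0 by simp
  have wM: "\<And>y. y \<in> {0..t0} \<Longrightarrow> w y \<le> M" using t0max t0T by (auto simp: M_def)
  have cap0: "has_caputo_derivative \<nu> w (- c * M) t0" using cap[OF t0pos] by (simp add: M_def)
  have cont0: "continuous_on {0..t0} w" using cap0 unfolding has_caputo_derivative_def by auto
  define G1 where "G1 = Gamma (1 - \<nu>)"
  have G1: "G1 > 0" using nu by (simp add: G1_def)
  define F where "F = (\<lambda>\<tau>. deriv w \<tau> * (t0 - \<tau>) powr (- \<nu>))"
  have "((\<lambda>\<tau>. deriv w \<tau> * (t0 - \<tau>) powr (- \<nu>) / G1) has_integral (- c * M)) {0..t0}"
    using cap0 unfolding has_caputo_derivative_def G1_def by auto
  then have "((\<lambda>\<tau>. G1 * (deriv w \<tau> * (t0 - \<tau>) powr (- \<nu>) / G1)) has_integral G1 * (- c * M)) {0..t0}"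
    by (rule has_integral_mult_right)
  then have Fint: "(F has_integral G1 * (- c * M)) {0..t0}"
    using G1 by (simp add: F_def)
  have Fle: "integral {0..t0} F \<le> 0"
    using integral_unique[OF Fint] G1 M c by (simp add: mult_nonneg_nonneg)
  have der: "\<And>x. x > 0 \<Longrightarrow> (w has_real_derivative deriv w x) (at x)"
    by (rule caputo_diff_at[OF cap]) auto
  have lower: "integral {0..b} F \<ge> (w b - M) * (t0 - b) powr (- \<nu>) + M * t0 powr (- \<nu>)"
    if b: "0 < b" "b < t0" for b
  proof -
    define k where "k = (\<lambda>\<tau>. (t0 - \<tau>) powr (- \<nu>))"
    define k' where "k' = (\<lambda>\<tau>. \<nu> * (t0 - \<tau>) powr (- \<nu> - 1))"
    have contw: "continuous_on {0..b} w" by (rule continuous_on_subset[OF cont0]) (use b in auto)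
    have contk: "continuous_on {0..b} k" unfolding k_def using b by (intro continuous_intros) auto
    have contk': "continuous_on {0..b} k'" unfolding k'_def using b by (intro continuous_intros) auto
    have kder: "(k has_vector_derivative k' x) (at x)" if "x \<in> {0<..<b}" for x
    proof -
      have "t0 - x > 0" using that b by auto
      then have "(k has_real_derivative k' x) (at x)"
        unfolding k_def k'_def
        by (auto intro!: derivative_eq_intros simp: field_simps)
      then show ?thesis by (simp add: has_real_derivative_iff_has_vector_derivative)
    qed
    have fder: "((\<lambda>\<tau>. w \<tau> - M) has_vector_derivative deriv w x) (at x)" if "x \<in> {0<..<b}" for x
    proof -
      have "((\<lambda>\<tau>. w \<tau> - M) has_real_derivative deriv w x) (at x)"
        using der[of x] that by (auto intro!: derivative_eq_intros)
      then show ?thesis by (simp add: has_real_derivative_iff_has_vector_derivative)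
    qed
    have contf: "continuous_on {0..b} (\<lambda>\<tau>. w \<tau> - M)" using contw by (intro continuous_intros)
    have "(\<lambda>\<tau>. (w \<tau> - M) * k' \<tau>) integrable_on {0..b}"
      by (intro integrable_continuous_interval continuous_intros contw contk')
    then obtain Y where Y: "((\<lambda>\<tau>. (w \<tau> - M) * k' \<tau>) has_integral Y) {0..b}"
      by (auto simp: integrable_on_def)
    have Yle: "Y \<le> 0"
    proof (rule has_integral_le[OF Y, of "\<lambda>_. 0"])
      show "((\<lambda>_. 0::real) has_integral 0) {0..b}" by simp
      fix x assume "x \<in> {0..b}"
      then have "w x \<le> M" using wM b by auto
      moreover have "k' x \<ge> 0" using nu by (simp add: k'_def)
      ultimately show "(w x - M) * k' x \<le> 0" by (simp add: mult_nonpos_nonneg)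
    qed
    define y where "y = (w b - M) * k b - (w 0 - M) * k 0 - Y"
    have "((\<lambda>\<tau>. deriv w \<tau> * k \<tau>) has_integral y) {0..b}"
    proof (rule integration_by_parts_interior[OF bounded_bilinear_mult _ contf contk fder kder])
      show "0 \<le> b" using b by simp
      show "((\<lambda>x. (w x - M) * k' x) has_integral (w b - M) * k b - (w 0 - M) * k 0 - y) {0..b}"
        using Y by (simp add: y_def)
    qed
    then have "integral {0..b} F = y" by (simp add: F_def k_def integral_unique)
    also have "y \<ge> (w b - M) * (t0 - b) powr (- \<nu>) + M * t0 powr (- \<nu>)"
      using Yle w0 by (simp add: y_def k_def)
    finally show ?thesis .
  qed
  define L where "L = at t0 within {0<..<t0}"
  have Lnt: "L \<noteq> bot"
    unfolding L_def using t0pos by (simp add: at_within_eq_bot_iff)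
  have Fint': "F integrable_on {0..t0}" using Fint by (auto simp: integrable_on_def)
  have lim1: "((\<lambda>b. integral {0..b} F) \<longlongrightarrow> integral {0..t0} F) L"
  proof -
    have "continuous_on {0..t0} (\<lambda>x. integral {0..x} F)"
      by (rule indefinite_integral_continuous_1[OF Fint'])
    then have "((\<lambda>x. integral {0..x} F) \<longlongrightarrow> integral {0..t0} F) (at t0 within {0..t0})"
      using t0pos unfolding continuous_on_def by auto
    then show ?thesis unfolding L_def by (rule tendsto_within_subset) auto
  qed
  have lim2: "((\<lambda>b. (w b - M) * (t0 - b) powr (- \<nu>) + M * t0 powr (- \<nu>)) \<longlongrightarrow> 0 + M * t0 powr (- \<nu>)) L"
  proof (rule tendsto_add[OF _ tendsto_const])
    have q: "((\<lambda>y. (w y - w t0) / (y - t0)) \<longlongrightarrow> deriv w t0) L"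
      using der[OF t0pos] unfolding has_field_derivative_iff L_def
      by (rule tendsto_within_subset) auto
    have p: "((\<lambda>b. (t0 - b) powr (1 - \<nu>)) \<longlongrightarrow> 0) L"
    proof (rule tendsto_zero_powrI)
      show "((\<lambda>b. t0 - b) \<longlongrightarrow> 0) L" unfolding L_def
        by (rule tendsto_eq_intros) (auto intro!: tendsto_eq_intros)
      show "((\<lambda>b. 1 - \<nu>) \<longlongrightarrow> 1 - \<nu>) L" by simp
      show "\<forall>\<^sub>F x in L. 0 \<le> t0 - x" unfolding L_def eventually_at_filter
        by (auto intro: always_eventually)
      show "0 < 1 - \<nu>" using nu by simp
    qed
    have "((\<lambda>b. - ((w b - w t0) / (b - t0)) * (t0 - b) powr (1 - \<nu>)) \<longlongrightarrow> - deriv w t0 * 0) L"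
      by (intro tendsto_mult tendsto_minus q p)
    moreover have "\<forall>\<^sub>F b in L. - ((w b - w t0) / (b - t0)) * (t0 - b) powr (1 - \<nu>) = (w b - M) * (t0 - b) powr (- \<nu>)"
      unfolding L_def eventually_at_filter
    proof (intro always_eventually allI impI)
      fix b assume "b \<noteq> t0" "b \<in> {0<..<t0}"
      then have tb: "t0 - b > 0" by simp
      have pe: "(t0 - b) powr (1 - \<nu>) = (t0 - b) * (t0 - b) powr (- \<nu>)"
        using tb by (simp add: powr_add[symmetric] powr_mult_base)
      have bt: "b - t0 \<noteq> 0" using tb by simp
      show "- ((w b - w t0) / (b - t0)) * (t0 - b) powr (1 - \<nu>) = (w b - M) * (t0 - b) powr (- \<nu>)"
        unfolding pe M_def using bt by (simp add: field_simps)
    qed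
    ultimately show "((\<lambda>b. (w b - M) * (t0 - b) powr (- \<nu>)) \<longlongrightarrow> 0) L"
      by (simp add: tendsto_cong)
  qed
  have ev: "\<forall>\<^sub>F b in L. (w b - M) * (t0 - b) powr (- \<nu>) + M * t0 powr (- \<nu>) \<le> integral {0..b} F"
    unfolding L_def eventually_at_filter
    by (intro always_eventually allI impI lower) auto
  have "0 + M * t0 powr (- \<nu>) \<le> integral {0..t0} F"
    by (rule tendsto_le[OF Lnt lim1 lim2 ev])
  moreover have "M * t0 powr (- \<nu>) > 0" using M t0pos by simp
  ultimately show False using Fle by simp
qed



lemma caputo_add:
  assumes f: "has_caputo_derivative \<nu> f Df t" and g: "has_caputo_derivative \<nu> g Dg t"
  shows "has_caputo_derivative \<nu> (\<lambda>x. f x + g x) (Df + Dg) t"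
proof -
  have df: "\<And>x. x \<in> {0<..<t} \<Longrightarrow> (f has_real_derivative deriv f x) (at x)"
    using f unfolding has_caputo_derivative_def by (auto simp: DERIV_deriv_iff_real_differentiable)
  have dg: "\<And>x. x \<in> {0<..<t} \<Longrightarrow> (g has_real_derivative deriv g x) (at x)"
    using g unfolding has_caputo_derivative_def by (auto simp: DERIV_deriv_iff_real_differentiable)
  have dfg: "\<And>x. x \<in> {0<..<t} \<Longrightarrow> ((\<lambda>x. f x + g x) has_real_derivative deriv f x + deriv g x) (at x)"
    using df dg by (intro DERIV_add) auto
  have cont: "continuous_on {0..t} (\<lambda>x. f x + g x)"
    using f g unfolding has_caputo_derivative_def by (auto intro: continuous_on_add)
  have diff: "\<forall>\<tau>\<in>{0<..<t}. (\<lambda>x. f x + g x) differentiable (at \<tau>)"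
    using dfg real_differentiable_def by blast
  have "((\<lambda>\<tau>. deriv f \<tau> * (t - \<tau>) powr (- \<nu>) / Gamma (1 - \<nu>) + deriv g \<tau> * (t - \<tau>) powr (- \<nu>) / Gamma (1 - \<nu>)) has_integral Df + Dg) {0..t}"
    using f g unfolding has_caputo_derivative_def by (intro has_integral_add) auto
  then have "((\<lambda>\<tau>. deriv (\<lambda>x. f x + g x) \<tau> * (t - \<tau>) powr (- \<nu>) / Gamma (1 - \<nu>)) has_integral Df + Dg) {0..t}"
  proof (rule has_integral_spike_finite[where S="{0,t}", rotated 2])
    fix x assume "x \<in> {0..t} - {0, t}"
    then have x: "x \<in> {0<..<t}" by auto
    show "deriv (\<lambda>x. f x + g x) x * (t - x) powr - \<nu> / Gamma (1 - \<nu>) =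
          deriv f x * (t - x) powr - \<nu> / Gamma (1 - \<nu>) + deriv g x * (t - x) powr - \<nu> / Gamma (1 - \<nu>)"
      using DERIV_imp_deriv[OF dfg[OF x]] by (simp add: add_divide_distrib distrib_right)
  qed auto
  then show ?thesis unfolding has_caputo_derivative_def using cont diff by auto
qed

lemma caputo_cmult:
  assumes f: "has_caputo_derivative \<nu> f Df t"
  shows "has_caputo_derivative \<nu> (\<lambda>x. c * f x) (c * Df) t"
proof -
  have df: "\<And>x. x \<in> {0<..<t} \<Longrightarrow> (f has_real_derivative deriv f x) (at x)"
    using f unfolding has_caputo_derivative_def by (auto simp: DERIV_deriv_iff_real_differentiable)
  have dfc: "\<And>x. x \<in> {0<..<t} \<Longrightarrow> ((\<lambda>x. c * f x) has_real_derivative c * deriv f x) (at x)"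
    using df by (intro DERIV_cmult) auto
  have cont: "continuous_on {0..t} (\<lambda>x. c * f x)"
    using f unfolding has_caputo_derivative_def by (auto intro: continuous_on_mult_left)
  have diff: "\<forall>\<tau>\<in>{0<..<t}. (\<lambda>x. c * f x) differentiable (at \<tau>)"
    using dfc real_differentiable_def by blast
  have "((\<lambda>\<tau>. c * (deriv f \<tau> * (t - \<tau>) powr (- \<nu>) / Gamma (1 - \<nu>))) has_integral c * Df) {0..t}"
    using f unfolding has_caputo_derivative_def by (intro has_integral_mult_right) auto
  then have "((\<lambda>\<tau>. deriv (\<lambda>x. c * f x) \<tau> * (t - \<tau>) powr (- \<nu>) / Gamma (1 - \<nu>)) has_integral c * Df) {0..t}"
  proof (rule has_integral_spike_finite[where S="{0,t}", rotated 2])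
    fix x assume "x \<in> {0..t} - {0, t}"
    then have x: "x \<in> {0<..<t}" by auto
    show "deriv (\<lambda>x. c * f x) x * (t - x) powr - \<nu> / Gamma (1 - \<nu>) =
          c * (deriv f x * (t - x) powr - \<nu> / Gamma (1 - \<nu>))"
      using DERIV_imp_deriv[OF dfc[OF x]] by simp
  qed auto
  then show ?thesis unfolding has_caputo_derivative_def using cont diff by auto
qed

lemma caputo_const: "has_caputo_derivative \<nu> (\<lambda>x. c) 0 t"
  unfolding has_caputo_derivative_def by auto

lemma caputo_sum:
  assumes "finite A" "\<And>i. i \<in> A \<Longrightarrow> has_caputo_derivative \<nu> (f i) (D i) t"
  shows "has_caputo_derivative \<nu> (\<lambda>x. \<Sum>i\<in>A. f i x) (\<Sum>i\<in>A. D i) t"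
  using assms
proof (induction A rule: finite_induct)
  case empty then show ?case using caputo_const[of \<nu> 0 t] by simp
next
  case (insert a A)
  have "has_caputo_derivative \<nu> (\<lambda>x. f a x + (\<Sum>i\<in>A. f i x)) (D a + (\<Sum>i\<in>A. D i)) t"
    using insert by (intro caputo_add) auto
  then show ?case using insert by simp
qed

lemma caputo_unique:
  assumes nu: "0 < \<nu>" "\<nu> < 1" and c: "c \<ge> 0" and w0: "w 0 = 0"
    and cap: "\<And>t. t > 0 \<Longrightarrow> has_caputo_derivative \<nu> w (- c * w t) t"
    and T: "T > 0"
  shows "w T = 0"
proof -
  have "w T \<le> 0" by (rule caputo_max_principle[OF nu c w0 cap T])
  moreover have "(\<lambda>x. - w x) T \<le> 0"
  proof (rule caputo_max_principle[OF nu c _ _ T])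
    show "- w 0 = 0" by (simp add: w0)
    fix t :: real assume "t > 0"
    from caputo_cmult[OF cap[OF this], of "-1"]
    show "has_caputo_derivative \<nu> (\<lambda>x. - w x) (- c * - w t) t" by simp
  qed
  ultimately show ?thesis by simp
qed



lemma binom_sum1: "(\<Sum>k\<le>N. binom_limit N x k) = 1"
  using binomial_ring[of x "1 - x" N] by (simp add: binom_limit_def mult_ac)

lemma binom_term_shift:
  "real (Suc j) * binom_limit (Suc M) x (Suc j) = real (Suc M) * x * binom_limit M x j"
proof -
  have "real (Suc j) * real (Suc M choose Suc j) = real (Suc M) * real (M choose j)"
    using Suc_times_binomial[of j M] by (metis of_nat_mult)
  then show ?thesis unfolding binom_limit_def
    by (simp add: mult_ac)
qed

lemma binom_mom1: "(\<Sum>k\<le>N. real k * binom_limit N x k) = real N * x"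
proof (cases N)
  case 0 then show ?thesis by simp
next
  case (Suc M)
  have "(\<Sum>k\<le>Suc M. real k * binom_limit (Suc M) x k) = (\<Sum>j\<le>M. real (Suc j) * binom_limit (Suc M) x (Suc j))"
    by (subst sum.atMost_Suc_shift) simp
  also have "\<dots> = (\<Sum>j\<le>M. real (Suc M) * x * binom_limit M x j)"
    by (simp only: binom_term_shift)
  also have "\<dots> = real (Suc M) * x" by (simp add: sum_distrib_left[symmetric] binom_sum1)
  finally show ?thesis using Suc by simp
qed

lemma binom_mom2: "(\<Sum>k\<le>N. real k * real k * binom_limit N x k) = real N * x * (1 - x) + (real N * x)^2"
proof (cases N)
  case 0 then show ?thesis by simp
next
  case (Suc M)
  have "(\<Sum>k\<le>Suc M. real k * real k * binom_limit (Suc M) x k) = (\<Sum>j\<le>M. real (Suc j) * (real (Suc j) * binom_limit (Suc M) x (Suc j)))"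
    by (subst sum.atMost_Suc_shift) (simp add: mult.assoc)
  also have "\<dots> = (\<Sum>j\<le>M. real (Suc M) * x * (real j * binom_limit M x j + binom_limit M x j))"
    by (simp only: binom_term_shift) (simp add: algebra_simps)
  also have "\<dots> = real (Suc M) * x * (real M * x + 1)"
    by (simp add: sum_distrib_left[symmetric] sum.distrib binom_sum1 binom_mom1)
  finally show ?thesis using Suc by (simp add: algebra_simps power2_eq_square)
qed

lemma shiftA:
  fixes f :: "nat \<Rightarrow> real"
  shows "(\<Sum>n\<le>N. (if n < N then f (Suc n) else 0)) = (\<Sum>n\<le>N. f n) - f 0"
proof -
  have "(\<Sum>n\<le>N. (if n < N then f (Suc n) else 0)) = (\<Sum>n<Suc N. (if n < N then f (Suc n) else 0))"
    by (simp add: lessThan_Suc_atMost)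
  also have "\<dots> = (\<Sum>n<N. f (Suc n))"
    by (simp add: sum.lessThan_Suc)
  also have "\<dots> = (\<Sum>n\<le>N. f n) - f 0"
    by (simp add: sum.atMost_shift)
  finally show ?thesis .
qed

lemma shiftE:
  fixes g :: "nat \<Rightarrow> real"
  shows "(\<Sum>n\<le>N. (if 0 < n then g (n - 1) else 0)) = (\<Sum>n\<le>N. g n) - g N"
proof -
  have "(\<Sum>n\<le>N. (if 0 < n then g (n - 1) else 0)) = (\<Sum>n<N. g n)"
    by (simp add: sum.atMost_shift)
  also have "\<dots> = (\<Sum>n\<le>N. g n) - g N"
    by (simp add: lessThan_Suc_atMost[symmetric] sum.lessThan_Suc)
  finally show ?thesis .
qed



lemma rhs_sum: "(\<Sum>n\<le>N. fbp_rhs lam mu N p n t) = 0"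
proof -
  define A where "A = (\<lambda>n. if n < N then mu * real (n + 1) * p (n + 1) t else 0)"
  define B where "B = (\<lambda>n. mu * real n * p n t)"
  define C where "C = (\<lambda>n. lam * real (N - n) * p n t)"
  define E where "E = (\<lambda>n. if 0 < n then lam * real (N - n + 1) * p (n - 1) t else (0::real))"
  have split: "(\<Sum>n\<le>N. fbp_rhs lam mu N p n t) = (\<Sum>n\<le>N. A n) - (\<Sum>n\<le>N. B n) - (\<Sum>n\<le>N. C n) + (\<Sum>n\<le>N. E n)"
    by (simp add: fbp_rhs_def A_def B_def C_def E_def sum.distrib sum_subtractf)
  have "(\<Sum>n\<le>N. A n) = (\<Sum>n\<le>N. (if n < N then B (Suc n) else 0))"
    by (intro sum.cong) (auto simp: A_def B_def)
  also have "\<dots> = (\<Sum>n\<le>N. B n)" using shiftA[where N=N and f=B] by (simp add: B_def)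
  finally have sA: "(\<Sum>n\<le>N. A n) = (\<Sum>n\<le>N. B n)" .
  have "(\<Sum>n\<le>N. E n) = (\<Sum>n\<le>N. (if 0 < n then C (n - 1) else 0))"
    by (intro sum.cong) (auto simp: E_def C_def Suc_diff_le)
  also have "\<dots> = (\<Sum>n\<le>N. C n)" using shiftE[where N=N and g=C] by (simp add: C_def)
  finally have sE: "(\<Sum>n\<le>N. E n) = (\<Sum>n\<le>N. C n)" .
  show ?thesis using split sA sE by simp
qed

lemma rhs_wsum: "(\<Sum>n\<le>N. real n * fbp_rhs lam mu N p n t) =
   lam * real N * (\<Sum>n\<le>N. p n t) - (lam + mu) * (\<Sum>n\<le>N. real n * p n t)"
proof -
  define A where "A = (\<lambda>n. real n * (if n < N then mu * real (n + 1) * p (n + 1) t else 0))"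
  define B where "B = (\<lambda>n. real n * (mu * real n * p n t))"
  define C where "C = (\<lambda>n. real n * (lam * real (N - n) * p n t))"
  define E where "E = (\<lambda>n. real n * (if 0 < n then lam * real (N - n + 1) * p (n - 1) t else (0::real)))"
  define f where "f = (\<lambda>j. real (j - 1) * (mu * real j * p j t))"
  define g where "g = (\<lambda>j. real (j + 1) * (lam * real (N - j) * p j t))"
  have split: "(\<Sum>n\<le>N. real n * fbp_rhs lam mu N p n t) = (\<Sum>n\<le>N. A n) - (\<Sum>n\<le>N. B n) - (\<Sum>n\<le>N. C n) + (\<Sum>n\<le>N. E n)"
    by (simp add: fbp_rhs_def A_def B_def C_def E_def sum.distrib sum_subtractf algebra_simps)
  have "(\<Sum>n\<le>N. A n) = (\<Sum>n\<le>N. (if n < N then f (Suc n) else 0))"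
    by (intro sum.cong) (auto simp: A_def f_def)
  also have "\<dots> = (\<Sum>n\<le>N. f n)" using shiftA[where N=N and f=f] by (simp add: f_def)
  finally have sA: "(\<Sum>n\<le>N. A n) = (\<Sum>n\<le>N. f n)" .
  have "(\<Sum>n\<le>N. E n) = (\<Sum>n\<le>N. (if 0 < n then g (n - 1) else 0))"
    by (intro sum.cong) (auto simp: E_def g_def Suc_diff_le)
  also have "\<dots> = (\<Sum>n\<le>N. g n)" using shiftE[where N=N and g=g] by (simp add: g_def)
  finally have sE: "(\<Sum>n\<le>N. E n) = (\<Sum>n\<le>N. g n)" .
  have "(\<Sum>n\<le>N. A n) - (\<Sum>n\<le>N. B n) - (\<Sum>n\<le>N. C n) + (\<Sum>n\<le>N. E n)
        = (\<Sum>n\<le>N. f n - B n - C n + g n)"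
    by (simp add: sA sE sum.distrib sum_subtractf)
  also have "\<dots> = (\<Sum>n\<le>N. lam * real N * p n t - (lam + mu) * (real n * p n t))"
  proof (intro sum.cong refl)
    fix n assume "n \<in> {..N}"
    then have nN: "n \<le> N" by simp
    have r1: "real (N - n) = real N - real n" using nN by (simp add: of_nat_diff)
    show "f n - B n - C n + g n = lam * real N * p n t - (lam + mu) * (real n * p n t)"
    proof (cases n)
      case 0 then show ?thesis by (simp add: f_def B_def C_def g_def)
    next
      case (Suc m)
      have r1': "real (N - Suc m) = real N - real (Suc m)" using r1 Suc by simp
      show ?thesis using Suc by (simp add: f_def B_def C_def g_def r1' algebra_simps)
    qed
  qed
  also have "\<dots> = lam * real N * (\<Sum>n\<le>N. p n t) - (lam + mu) * (\<Sum>n\<le>N. real n * p n t)"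
    by (simp add: sum_subtractf sum_distrib_left)
  finally show ?thesis using split by simp
qed



lemma caputo_cong: "has_caputo_derivative \<nu> f D t \<Longrightarrow> D = D' \<Longrightarrow> (\<And>x. f x = g x) \<Longrightarrow> has_caputo_derivative \<nu> g D' t"
proof -
  assume "has_caputo_derivative \<nu> f D t" "D = D'" "\<And>x. f x = g x"
  moreover have "f = g" using \<open>\<And>x. f x = g x\<close> by auto
  ultimately show ?thesis by simp
qed

lemma mean_formula:
  assumes lam: "lam > 0" and mu: "mu > 0" and nu: "0 < \<nu>" "\<nu> < 1"
    and P: "fbp_state_probs lam mu N \<nu> m P" and mN: "m \<le> N" and r: "r > 0"
  shows "(\<Sum>k\<le>N. real k * P k r) = real N * (lam / (lam + mu))
           + (real m - real N * (lam / (lam + mu))) * mittag_leffler \<nu> (- (lam + mu) * r powr \<nu>)"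
proof -
  define c where "c = lam + mu"
  have c: "c > 0" using lam mu by (simp add: c_def)
  define \<xi> where "\<xi> = lam / (lam + mu)"
  have cxi: "c * \<xi> = lam" using c by (simp add: c_def \<xi>_def)
  have init: "\<And>n. n \<le> N \<Longrightarrow> P n 0 = (if n = m then 1 else 0)"
    and cap: "\<And>n t. n \<le> N \<Longrightarrow> t > 0 \<Longrightarrow> has_caputo_derivative \<nu> (P n) (fbp_rhs lam mu N P n t) t"
    using P unfolding fbp_state_probs_def by auto
  have S0: "(\<Sum>n\<le>N. P n 0) = 1"
  proof -
    have "(\<Sum>n\<le>N. P n 0) = (\<Sum>n\<le>N. (if n = m then 1 else 0))"
      using init by (intro sum.cong) auto
    then show ?thesis using mN by simp
  qed
  have M0: "(\<Sum>n\<le>N. real n * P n 0) = real m"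
  proof -
    have "(\<Sum>n\<le>N. real n * P n 0) = (\<Sum>n\<le>N. (if n = m then real m else 0))"
      using init by (intro sum.cong) auto
    then show ?thesis using mN by simp
  qed
  define S where "S = (\<lambda>x. \<Sum>n\<le>N. P n x)"
  have capS: "has_caputo_derivative \<nu> S 0 t" if "t > 0" for t
    using caputo_sum[of "{..N}" \<nu> P "\<lambda>n. fbp_rhs lam mu N P n t" t] cap that rhs_sum
    by (simp add: S_def)
  have S1: "S x = 1" if "x > 0" for x
  proof -
    define w where "w = (\<lambda>x. S x + (-1))"
    have "w x = 0"
    proof (rule caputo_unique[OF nu order.refl _ _ that])
      show "w 0 = 0" using S0 by (simp add: w_def S_def)
      fix t :: real assume "t > 0"
      show "has_caputo_derivative \<nu> w (- 0 * w t) t"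
        using caputo_add[OF capS[OF \<open>t > 0\<close>] caputo_const[of \<nu> "-1" t]] by (simp add: w_def)
    qed
    then show ?thesis by (simp add: w_def)
  qed
  define mean where "mean = (\<lambda>x. \<Sum>k\<le>N. real k * P k x)"
  have capM: "has_caputo_derivative \<nu> mean (lam * real N - c * mean t) t" if "t > 0" for t
  proof -
    have "has_caputo_derivative \<nu> mean (\<Sum>n\<le>N. real n * fbp_rhs lam mu N P n t) t"
      unfolding mean_def using cap that by (intro caputo_sum caputo_cmult) auto
    moreover have "(\<Sum>n\<le>N. real n * fbp_rhs lam mu N P n t) = lam * real N - c * mean t"
      using rhs_wsum[where N=N and lam=lam and mu=mu and p=P and t=t] S1[OF that] by (simp add: S_def mean_def c_def)
    ultimately show ?thesis by simp
  qed
  define fp where "fp = (\<lambda>x. real N * \<xi> + (real m - real N * \<xi>) * mittag_leffler \<nu> (- c * x powr \<nu>))"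
  have capF: "has_caputo_derivative \<nu> fp ((real m - real N * \<xi>) * (- c * mittag_leffler \<nu> (- c * t powr \<nu>))) t"
    if "t > 0" for t
  proof -
    have "has_caputo_derivative \<nu> (\<lambda>x. real N * \<xi> + (real m - real N * \<xi>) * mittag_leffler \<nu> (- c * x powr \<nu>))
            (0 + (real m - real N * \<xi>) * (- c * mittag_leffler \<nu> (- c * t powr \<nu>))) t"
      by (intro caputo_add caputo_const caputo_cmult ml_caputo nu c that)
    then show ?thesis by (simp add: fp_def)
  qed
  define w where "w = (\<lambda>x. mean x + (-1) * fp x)"
  have "w r = 0"
  proof (rule caputo_unique[OF nu less_imp_le[OF c] _ _ r])
    have "mean 0 = real m"
      using M0 by (simp add: mean_def)
    moreover have "fp 0 = real m" by (simp add: fp_def ml_zero)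
    ultimately show "w 0 = 0" by (simp add: w_def)
    fix t :: real assume t: "t > 0"
    show "has_caputo_derivative \<nu> w (- c * w t) t"
    proof (rule caputo_cong[OF caputo_add[OF capM[OF t] caputo_cmult[OF capF[OF t]]]])
      show "lam * real N - c * mean t + -1 * ((real m - real N * \<xi>) * (- c * mittag_leffler \<nu> (- c * t powr \<nu>))) = - c * w t"
        using cxi by (simp add: w_def fp_def algebra_simps)
    qed (simp add: w_def)
  qed
  then show ?thesis by (simp add: w_def mean_def fp_def c_def \<xi>_def)
qed



theorem mainTheorem2:
  fixes lam mu \<nu> s t :: real and N M :: nat
    and P0 :: "nat \<Rightarrow> nat \<Rightarrow> real \<Rightarrow> real"
  assumes "lam > 0" and "mu > 0" and "1 \<le> M" and "M \<le> N"
    and "0 < \<nu>" and "\<nu> < 1"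
    and "\<And>m. m \<le> N \<Longrightarrow> fbp_state_probs lam mu N \<nu> m (P0 m)"
    and "0 < s" and "s < t"
  shows "fbp_mixed_moment N (lam / (lam + mu)) P0 s t =
           (real N * (lam / (lam + mu)))^2
           - real N * (lam / (lam + mu)) * (lam / (lam + mu) - 1)
             * mittag_leffler \<nu> (- (lam + mu) * (t - s) powr \<nu>)"
proof -
  define \<xi> where "\<xi> = lam / (lam + mu)"
  define E where "E = mittag_leffler \<nu> (- (lam + mu) * (t - s) powr \<nu>)"
  have r: "t - s > 0" using assms by simp
  have mean: "(\<Sum>k\<le>N. real k * P0 n k (t - s)) = real N * \<xi> + (real n - real N * \<xi>) * E"
    if "n \<le> N" for n
    unfolding \<xi>_def E_def
    by (rule mean_formula[OF assms(1,2,5,6) assms(7)[OF that] that r])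
  have "fbp_mixed_moment N \<xi> P0 s t = (\<Sum>n\<le>N. real n * binom_limit N \<xi> n * (\<Sum>k\<le>N. real k * P0 n k (t - s)))"
    unfolding fbp_mixed_moment_def by (simp add: sum_distrib_left mult_ac)
  also have "\<dots> = (\<Sum>n\<le>N. real n * binom_limit N \<xi> n * (real N * \<xi> + (real n - real N * \<xi>) * E))"
    using mean by (intro sum.cong) auto
  also have "\<dots> = real N * \<xi> * (1 - E) * (\<Sum>n\<le>N. real n * binom_limit N \<xi> n)
                   + E * (\<Sum>n\<le>N. real n * real n * binom_limit N \<xi> n)"
  proof -
    have "(\<Sum>n\<le>N. real n * binom_limit N \<xi> n * (real N * \<xi> + (real n - real N * \<xi>) * E))
        = (\<Sum>n\<le>N. real N * \<xi> * (1 - E) * (real n * binom_limit N \<xi> n) + E * (real n * real n * binom_limit N \<xi> n))"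
      by (intro sum.cong) (auto simp: algebra_simps)
    also have "\<dots> = real N * \<xi> * (1 - E) * (\<Sum>n\<le>N. real n * binom_limit N \<xi> n)
                   + E * (\<Sum>n\<le>N. real n * real n * binom_limit N \<xi> n)"
      by (simp only: sum.distrib sum_distrib_left)
    finally show ?thesis .
  qed
  also have "\<dots> = (real N * \<xi>)^2 - real N * \<xi> * (\<xi> - 1) * E"
    by (simp only: binom_mom1 binom_mom2) (simp add: algebra_simps power2_eq_square)
  finally show ?thesis by (simp add: \<xi>_def E_def)
qed

end
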